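(* Let $\mathcal{C}=(\mathcal{T},\mathcal{I},\mathcal{R})$ be an extraction context with thresholds \textit{minsupp} and \textit{minbond}. Then $\mathcal{RCPR}=\mathcal{CRCP}\cup\mathcal{MRCP}$ is a perfect cover of $\mathcal{RCP}$: it is an exact concise representation of $\mathcal{RCP}$ and its size never exceeds that of $\mathcal{RCP}$, i.e. $|\mathcal{RCPR}|\le|\mathcal{RCP}|$ for every extraction context and all values of \textit{minsupp} and \textit{minbond}.
   Context: An extraction context is a triple $\mathcal{C}=(\mathcal{T},\mathcal{I},\mathcal{R})$ with $\mathcal{T}$ a finite set of transactions, $\mathcal{I}$ a finite set of items and $\mathcal{R}\subseteq\mathcal{T}\times\mathcal{I}$. For a pattern $I\subseteq\mathcal{I}$: $\mathit{Supp}(\wedge I)=|\{t:\forall i\in I,(t,i)\in\mathcal{R}\}|$, $\mathit{Supp}(\vee I)=|\{t:\exists i\in I,(t,i)\in\mathcal{R}\}|$, and for nonempty $I$, $\mathit{bond}(I)=\mathit{Supp}(\wedge I)/\mathit{Supp}(\vee I)$ (with $\mathit{bond}(\emptyset)=+\infty$ by convention). $\mathcal{RCP}=\{I\subseteq\mathcal{I}:\mathit{Supp}(\wedge I)<\textit{minsupp},\ \mathit{bond}(I)\ge\textit{minbond}\}$. $\mathcal{CRCP}=\{I\in\mathcal{RCP}:\forall I_1\supsetneq I,\ \mathit{bond}(I)>\mathit{bond}(I_1)\}$; $\mathcal{MRCP}=\{I\in\mathcal{RCP}:\forall I_1\subsetneq I,\ \mathit{bond}(I)<\mathit{bond}(I_1)\}$.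 A family $\mathcal{S}\subseteq\mathcal{RCP}$, with each $J\in\mathcal{S}$ recorded together with $\mathit{Supp}(\wedge J)$ and $\mathit{bond}(J)$, is an exact concise representation of $\mathcal{RCP}$ if, for every pattern $I\subseteq\mathcal{I}$, the recorded data alone suffice to decide whether $I\in\mathcal{RCP}$ and, when $I\in\mathcal{RCP}$, to determine exactly $\mathit{Supp}(\wedge I)$ and $\mathit{bond}(I)$. *)

theory Defs
  imports "HOL-Library.Extended_Real"
begin

definition extraction_context :: "'t set \<Rightarrow> 'i set \<Rightarrow> ('t \<times> 'i) set \<Rightarrow> bool" where
  "extraction_context T Its R \<longleftrightarrow> finite T \<and> finite Its \<and> R \<subseteq> T \<times> Its"

definition conj_supp :: "'t set \<Rightarrow> ('t \<times> 'i) set \<Rightarrow> 'i set \<Rightarrow> nat" where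
  "conj_supp T R I = card {t \<in> T. \<forall>i\<in>I. (t, i) \<in> R}"

definition disj_supp :: "'t set \<Rightarrow> ('t \<times> 'i) set \<Rightarrow> 'i set \<Rightarrow> nat" where
  "disj_supp T R I = card {t \<in> T. \<exists>i\<in>I. (t, i) \<in> R}"

text \<open>bond(I) = Supp(\<and>I)/Supp(\<or>I) for nonempty I, +\<infinity> for I = {}.
  (Real division: x/0 = 0 in Isabelle; only relevant if no transaction contains an item of I.)\<close>
definition bond :: "'t set \<Rightarrow> ('t \<times> 'i) set \<Rightarrow> 'i set \<Rightarrow> ereal" where
  "bond T R I = (if I = {} then \<infinity>
                 else ereal (real (conj_supp T R I) / real (disj_supp T R I)))"

definition RCP :: "'t set \<Rightarrow> 'i set \<Rightarrow> ('t \<times> 'i) set \<Rightarrow> real \<Rightarrow> real \<Rightarrow> 'i set set" where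
  "RCP T Its R minsupp minbond =
     {I. I \<subseteq> Its \<and> real (conj_supp T R I) < minsupp \<and> bond T R I \<ge> ereal minbond}"

definition CRCP :: "'t set \<Rightarrow> 'i set \<Rightarrow> ('t \<times> 'i) set \<Rightarrow> real \<Rightarrow> real \<Rightarrow> 'i set set" where
  "CRCP T Its R minsupp minbond =
     {I \<in> RCP T Its R minsupp minbond.
        \<forall>I1. I \<subset> I1 \<and> I1 \<subseteq> Its \<longrightarrow> bond T R I > bond T R I1}"

definition MRCP :: "'t set \<Rightarrow> 'i set \<Rightarrow> ('t \<times> 'i) set \<Rightarrow> real \<Rightarrow> real \<Rightarrow> 'i set set" where
  "MRCP T Its R minsupp minbond =
     {I \<in> RCP T Its R minsupp minbond.
        \<forall>I1. I1 \<subset> I \<longrightarrow> bond T R I < bond T R I1}"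

definition RCPR :: "'t set \<Rightarrow> 'i set \<Rightarrow> ('t \<times> 'i) set \<Rightarrow> real \<Rightarrow> real \<Rightarrow> 'i set set" where
  "RCPR T Its R minsupp minbond = CRCP T Its R minsupp minbond \<union> MRCP T Its R minsupp minbond"

definition recorded :: "'t set \<Rightarrow> ('t \<times> 'i) set \<Rightarrow> 'i set set \<Rightarrow> ('i set \<times> nat \<times> ereal) set" where
  "recorded T R S = {(J, conj_supp T R J, bond T R J) | J. J \<in> S}"

definition exact_concise_rep ::
  "('t set \<Rightarrow> 'i set \<Rightarrow> ('t \<times> 'i) set \<Rightarrow> real \<Rightarrow> real \<Rightarrow> 'i set set) \<Rightarrow> bool" where
  "exact_concise_rep Rep \<longleftrightarrow>
     (\<forall>T Its R minsupp minbond. extraction_context T Its R \<longrightarrow>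
          Rep T Its R minsupp minbond \<subseteq> RCP T Its R minsupp minbond) \<and>
     (\<exists>Dec :: ('i set \<times> nat \<times> ereal) set \<Rightarrow> real \<Rightarrow> real \<Rightarrow> 'i set \<Rightarrow> (nat \<times> ereal) option.
        \<forall>T Its R minsupp minbond I. extraction_context T Its R \<longrightarrow> I \<subseteq> Its \<longrightarrow>
          Dec (recorded T R (Rep T Its R minsupp minbond)) minsupp minbond I =
            (if I \<in> RCP T Its R minsupp minbond
             then Some (conj_supp T R I, bond T R I) else None))"

end

theory Submission
  imports Defs
begin

lemma conj_anti: "finite T \<Longrightarrow> I \<subseteq> J \<Longrightarrow> conj_supp T R J \<le> conj_supp T R I"
  unfolding conj_supp_def by (rule card_mono) auto

lemma disj_mono: "finite T \<Longrightarrow> I \<subseteq> J \<Longrightarrow> disj_supp T R I \<le> disj_supp T R J"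
  unfolding disj_supp_def by (rule card_mono) auto

lemma conj_le_disj: "finite T \<Longrightarrow> I \<noteq> {} \<Longrightarrow> conj_supp T R I \<le> disj_supp T R I"
  unfolding disj_supp_def conj_supp_def by (rule card_mono) auto

lemma bond_anti:
  assumes T: "finite T" and IJ: "I \<subseteq> J" shows "bond T R J \<le> bond T R I"
proof (cases "I = {}")
  case True thus ?thesis by (simp add: bond_def)
next
  case False
  hence J: "J \<noteq> {}" using IJ by auto
  define cI where "cI = conj_supp T R I"
  define cJ where "cJ = conj_supp T R J"
  define dI where "dI = disj_supp T R I"
  define dJ where "dJ = disj_supp T R J"
  have 1: "cJ \<le> cI" "dI \<le> dJ" "cI \<le> dI" "cJ \<le> dJ"
    using conj_anti[OF T IJ] disj_mono[OF T IJ] conj_le_disj[OF T False] conj_le_disj[OF T J]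
    by (auto simp: cI_def cJ_def dI_def dJ_def)
  have "real cJ / real dJ \<le> real cI / real dI"
  proof (cases "dI = 0")
    case True thus ?thesis using 1 by simp
  next
    case False
    have "real cJ / real dJ \<le> real cI / real dJ" using 1 by (simp add: divide_right_mono)
    also have "\<dots> \<le> real cI / real dI" using 1 False by (intro divide_left_mono) auto
    finally show ?thesis .
  qed
  thus ?thesis using False J by (simp add: bond_def cI_def cJ_def dI_def dJ_def)
qed

lemma bond_eq_conj:
  assumes T: "finite T" and IJ: "I \<subseteq> J" and eq: "bond T R J = bond T R I"
  shows "conj_supp T R J = conj_supp T R I"
proof (cases "I = {}")
  case True
  then have "J = {}" using eq by (auto simp: bond_def split: if_splits)
  thus ?thesis using True by simp
next
  case False
  hence J: "J \<noteq> {}" using IJ by auto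
  define cI where "cI = conj_supp T R I"
  define cJ where "cJ = conj_supp T R J"
  define dI where "dI = disj_supp T R I"
  define dJ where "dJ = disj_supp T R J"
  have 1: "cJ \<le> cI" "dI \<le> dJ" "cI \<le> dI" "cJ \<le> dJ"
    using conj_anti[OF T IJ] disj_mono[OF T IJ] conj_le_disj[OF T False] conj_le_disj[OF T J]
    by (auto simp: cI_def cJ_def dI_def dJ_def)
  have e: "real cJ / real dJ = real cI / real dI"
    using eq False J by (simp add: bond_def cI_def cJ_def dI_def dJ_def)
  have "cJ = cI"
  proof (cases "cI = 0")
    case True thus ?thesis using 1 by simp
  next
    case False
    hence "dI > 0" "dJ > 0" using 1 by auto
    hence "real cJ * real dI = real cI * real dJ" using e by (metis (no_types) divide_eq_eq nonzero_mult_div_cancel_right of_nat_0_less_iff order_less_irrefl times_divide_eq_left)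
    moreover have "real cI * real dI \<le> real cI * real dJ" using 1 by (simp add: mult_left_mono)
    ultimately have "real cI * real dI \<le> real cJ * real dI" by simp
    hence "cI \<le> cJ" using \<open>dI > 0\<close> by simp
    thus ?thesis using 1 by simp
  qed
  thus ?thesis by (simp add: cI_def cJ_def)
qed

lemma bond_strict:
  assumes T: "finite T" and IJ: "J1 \<subseteq> J" and lt: "conj_supp T R J < conj_supp T R J1"
  shows "bond T R J < bond T R J1"
proof -
  have "bond T R J \<le> bond T R J1" using bond_anti[OF T IJ] .
  moreover have "bond T R J \<noteq> bond T R J1"
    using bond_eq_conj[OF T IJ] lt by auto
  ultimately show ?thesis by simp
qed

lemma closure_ex:
  assumes ctx: "extraction_context T Its R" and I: "I \<subseteq> Its"
  shows "\<exists>K. I \<subseteq> K \<and> K \<subseteq> Its \<and> bond T R K = bond T R I \<and>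
             (\<forall>K1. K \<subset> K1 \<and> K1 \<subseteq> Its \<longrightarrow> bond T R K > bond T R K1)"
proof -
  have T: "finite T" and F: "finite Its" using ctx by (auto simp: extraction_context_def)
  define A where "A = {K. I \<subseteq> K \<and> K \<subseteq> Its \<and> bond T R K = bond T R I}"
  have "A \<subseteq> Pow Its" unfolding A_def by blast
  hence "finite A" using F by (simp add: finite_subset)
  moreover have "I \<in> A" using I unfolding A_def by blast
  hence "A \<noteq> {}" by blast
  ultimately obtain K where K: "K \<in> A" and mx: "\<And>b. b \<in> A \<Longrightarrow> K \<le> b \<Longrightarrow> K = b"
    using finite_has_maximal by metis
  have K1: "I \<subseteq> K" "K \<subseteq> Its" "bond T R K = bond T R I" using K unfolding A_def by blast+
  have K2: "bond T R K > bond T R K1" if a: "K \<subset> K1" "K1 \<subseteq> Its" for K1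
  proof -
    have le: "bond T R K1 \<le> bond T R K" using bond_anti[OF T] a(1) by blast
    have "K1 \<notin> A" using mx a(1) by blast
    hence "bond T R K1 \<noteq> bond T R I" using a K1 unfolding A_def by blast
    hence "bond T R K1 \<noteq> bond T R K" using K1(3) by simp
    thus ?thesis using le by simp
  qed
  show ?thesis
  proof (intro exI[of _ K] conjI allI impI)
    fix K1 assume "K \<subset> K1 \<and> K1 \<subseteq> Its"
    thus "bond T R K > bond T R K1" using K2 by simp
  qed (use K1 in simp_all)
qed

lemma minimal_ex:
  assumes ctx: "extraction_context T Its R" and I: "I \<in> RCP T Its R ms mb"
  shows "\<exists>J. J \<subseteq> I \<and> J \<in> MRCP T Its R ms mb"
proof -
  have T: "finite T" and F: "finite Its" using ctx by (auto simp: extraction_context_def)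
  have IIts: "I \<subseteq> Its" and Ims: "real (conj_supp T R I) < ms" and Imb: "ereal mb \<le> bond T R I"
    using I by (simp_all add: RCP_def)
  define A where "A = {J. J \<subseteq> I \<and> real (conj_supp T R J) < ms}"
  have "A \<subseteq> Pow Its" using IIts unfolding A_def by blast
  hence fA: "finite A" using F by (simp add: finite_subset)
  have "I \<in> A" using Ims unfolding A_def by blast
  hence neA: "A \<noteq> {}" by blast
  obtain J where J: "J \<in> A" and mn: "\<And>b. b \<in> A \<Longrightarrow> b \<le> J \<Longrightarrow> J = b"
    using finite_has_minimal[OF fA neA] by metis
  have JI: "J \<subseteq> I" and Jms: "real (conj_supp T R J) < ms" using J unfolding A_def by blast+
  have "bond T R I \<le> bond T R J" by (rule bond_anti[OF T JI])
  hence "ereal mb \<le> bond T R J" using Imb by (rule order_trans[rotated])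
  hence JR: "J \<in> RCP T Its R ms mb" using Jms JI IIts by (simp add: RCP_def)
  have lt: "bond T R J < bond T R J1" if a: "J1 \<subset> J" for J1
  proof -
    have "J1 \<notin> A" using mn a by blast
    moreover have "J1 \<subseteq> I" using a JI by blast
    ultimately have "\<not> real (conj_supp T R J1) < ms" unfolding A_def by blast
    hence "conj_supp T R J < conj_supp T R J1" using Jms by linarith
    thus ?thesis using bond_strict[OF T] a by blast
  qed
  have "J \<in> MRCP T Its R ms mb" unfolding MRCP_def using JR lt by blast
  thus ?thesis using JI by blast
qed

lemma rcpr_sub: "RCPR T Its R ms mb \<subseteq> RCP T Its R ms mb"
  unfolding RCPR_def CRCP_def MRCP_def by blast

lemma memD: "(K, p) \<in> recorded T R S \<longleftrightarrow> K \<in> S \<and> p = (conj_supp T R K, bond T R K)"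
  unfolding recorded_def by blast

lemma rcp_between:
  assumes T: "finite T" and J: "J \<in> RCP T Its R ms mb" and K: "K \<in> RCP T Its R ms mb"
    and JI: "J \<subseteq> I" and IK: "I \<subseteq> K" and I: "I \<subseteq> Its"
  shows "I \<in> RCP T Its R ms mb"
proof -
  have "conj_supp T R I \<le> conj_supp T R J" by (rule conj_anti[OF T JI])
  moreover have "real (conj_supp T R J) < ms" using J by (simp add: RCP_def)
  ultimately have 1: "real (conj_supp T R I) < ms" by linarith
  have "bond T R K \<le> bond T R I" by (rule bond_anti[OF T IK])
  moreover have "ereal mb \<le> bond T R K" using K by (simp add: RCP_def)
  ultimately have 2: "ereal mb \<le> bond T R I" by (rule order_trans[rotated])
  show ?thesis using 1 2 I by (simp add: RCP_def)
qed

lemma closure_crcp: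
  assumes ctx: "extraction_context T Its R" and I: "I \<in> RCP T Its R ms mb"
  shows "\<exists>K. I \<subseteq> K \<and> K \<in> CRCP T Its R ms mb \<and> bond T R K = bond T R I"
proof -
  have T: "finite T" using ctx by (simp add: extraction_context_def)
  have IIts: "I \<subseteq> Its" using I by (simp add: RCP_def)
  obtain K where K: "I \<subseteq> K" "K \<subseteq> Its" "bond T R K = bond T R I"
    "\<forall>K1. K \<subset> K1 \<and> K1 \<subseteq> Its \<longrightarrow> bond T R K > bond T R K1"
    using closure_ex[OF ctx IIts] by blast
  have "conj_supp T R K \<le> conj_supp T R I" by (rule conj_anti[OF T K(1)])
  moreover have "real (conj_supp T R I) < ms" using I by (simp add: RCP_def)
  ultimately have 1: "real (conj_supp T R K) < ms" by linarith
  have 2: "ereal mb \<le> bond T R K" using I K(3) by (simp add: RCP_def)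
  have "K \<in> RCP T Its R ms mb" using 1 2 K(2) by (simp add: RCP_def)
  hence "K \<in> CRCP T Its R ms mb" using K(4) unfolding CRCP_def by blast
  thus ?thesis using K(1,3) by blast
qed

definition DecF :: "('i set \<times> nat \<times> ereal) set \<Rightarrow> real \<Rightarrow> real \<Rightarrow> 'i set \<Rightarrow> (nat \<times> ereal) option" where
  "DecF D ms mb I = (if (\<exists>J p. (J, p) \<in> D \<and> J \<subseteq> I) \<and> (\<exists>K p. (K, p) \<in> D \<and> I \<subseteq> K)
       then Some (SOME p. \<exists>K. (K, p) \<in> D \<and> I \<subseteq> K \<and> (\<forall>K' p'. (K', p') \<in> D \<and> I \<subseteq> K' \<longrightarrow> snd p' \<le> snd p))
       else None)"

lemma dec_cond:
  assumes ctx: "extraction_context T Its R" and IIts: "I \<subseteq> Its"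
  shows "((\<exists>J p. (J, p) \<in> recorded T R (RCPR T Its R ms mb) \<and> J \<subseteq> I) \<and>
          (\<exists>K p. (K, p) \<in> recorded T R (RCPR T Its R ms mb) \<and> I \<subseteq> K))
         \<longleftrightarrow> I \<in> RCP T Its R ms mb"
proof
  have T: "finite T" using ctx by (simp add: extraction_context_def)
  assume "(\<exists>J p. (J, p) \<in> recorded T R (RCPR T Its R ms mb) \<and> J \<subseteq> I) \<and>
          (\<exists>K p. (K, p) \<in> recorded T R (RCPR T Its R ms mb) \<and> I \<subseteq> K)"
  then obtain J K where J: "J \<in> RCPR T Its R ms mb" "J \<subseteq> I" and K: "K \<in> RCPR T Its R ms mb" "I \<subseteq> K"
    unfolding memD by blast
  have JR: "J \<in> RCP T Its R ms mb" using J(1) rcpr_sub by blast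
  have KR: "K \<in> RCP T Its R ms mb" using K(1) rcpr_sub by blast
  show "I \<in> RCP T Its R ms mb" by (rule rcp_between[OF T JR KR J(2) K(2) IIts])
next
  assume I: "I \<in> RCP T Its R ms mb"
  obtain J where J: "J \<subseteq> I" "J \<in> MRCP T Its R ms mb" using minimal_ex[OF ctx I] by blast
  obtain K where K: "I \<subseteq> K" "K \<in> CRCP T Its R ms mb" using closure_crcp[OF ctx I] by blast
  have "J \<in> RCPR T Its R ms mb" "K \<in> RCPR T Its R ms mb" using J K unfolding RCPR_def by blast+
  thus "(\<exists>J p. (J, p) \<in> recorded T R (RCPR T Its R ms mb) \<and> J \<subseteq> I) \<and>
          (\<exists>K p. (K, p) \<in> recorded T R (RCPR T Its R ms mb) \<and> I \<subseteq> K)"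
    unfolding memD using J(1) K(1) by blast
qed

lemma dec_val:
  assumes ctx: "extraction_context T Its R" and I: "I \<in> RCP T Its R ms mb"
  defines "D \<equiv> recorded T R (RCPR T Its R ms mb)"
  shows "(SOME p. \<exists>K. (K, p) \<in> D \<and> I \<subseteq> K \<and> (\<forall>K' p'. (K', p') \<in> D \<and> I \<subseteq> K' \<longrightarrow> snd p' \<le> snd p))
         = (conj_supp T R I, bond T R I)"
proof -
  have T: "finite T" using ctx by (simp add: extraction_context_def)
  let ?P = "\<lambda>p. \<exists>K. (K, p) \<in> D \<and> I \<subseteq> K \<and> (\<forall>K' p'. (K', p') \<in> D \<and> I \<subseteq> K' \<longrightarrow> snd p' \<le> snd p)"
  obtain K where K: "I \<subseteq> K" "K \<in> CRCP T Its R ms mb" "bond T R K = bond T R I"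
    using closure_crcp[OF ctx I] by blast
  have KS: "K \<in> RCPR T Its R ms mb" using K(2) unfolding RCPR_def by blast
  have KD: "(K, conj_supp T R K, bond T R K) \<in> D" unfolding D_def memD using KS by blast
  have ex: "?P (conj_supp T R K, bond T R K)"
  proof (intro exI conjI allI impI)
    show "(K, conj_supp T R K, bond T R K) \<in> D" by (rule KD)
    show "I \<subseteq> K" by (rule K(1))
    fix K' p' assume a: "(K', p') \<in> D \<and> I \<subseteq> K'"
    hence "p' = (conj_supp T R K', bond T R K')" unfolding D_def memD by blast
    moreover have "bond T R K' \<le> bond T R I" using bond_anti[OF T] a by blast
    ultimately show "snd p' \<le> snd (conj_supp T R K, bond T R K)" using K(3) by simp
  qed
  have uniq: "p = (conj_supp T R I, bond T R I)" if "?P p" for p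
  proof -
    from that obtain K2 where K2D: "(K2, p) \<in> D" "I \<subseteq> K2"
      "\<forall>K' p'. (K', p') \<in> D \<and> I \<subseteq> K' \<longrightarrow> snd p' \<le> snd p" by blast
    have p: "p = (conj_supp T R K2, bond T R K2)" using K2D(1) unfolding D_def memD by blast
    have "snd (conj_supp T R K, bond T R K) \<le> snd p" using K2D(3) KD K(1) by blast
    hence "bond T R K \<le> bond T R K2" using p by simp
    moreover have "bond T R K2 \<le> bond T R I" by (rule bond_anti[OF T K2D(2)])
    ultimately have e: "bond T R K2 = bond T R I" using K(3) by simp
    have "conj_supp T R K2 = conj_supp T R I" by (rule bond_eq_conj[OF T K2D(2) e])
    thus ?thesis using p e by simp
  qed
  have "?P (SOME p. ?P p)" by (rule someI[of ?P, OF ex])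
  thus ?thesis by (rule uniq)
qed

lemma dec_ok:
  assumes ctx: "extraction_context T Its R" and IIts: "I \<subseteq> Its"
  shows "DecF (recorded T R (RCPR T Its R ms mb)) ms mb I =
            (if I \<in> RCP T Its R ms mb then Some (conj_supp T R I, bond T R I) else None)"
proof (cases "I \<in> RCP T Its R ms mb")
  case True
  have c: "(\<exists>J p. (J, p) \<in> recorded T R (RCPR T Its R ms mb) \<and> J \<subseteq> I) \<and>
          (\<exists>K p. (K, p) \<in> recorded T R (RCPR T Its R ms mb) \<and> I \<subseteq> K)"
    using dec_cond[OF ctx IIts] True by blast
  show ?thesis unfolding DecF_def if_P[OF c] if_P[OF True] dec_val[OF ctx True] by (rule refl)
next
  case False
  have c: "\<not> ((\<exists>J p. (J, p) \<in> recorded T R (RCPR T Its R ms mb) \<and> J \<subseteq> I) \<and>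
          (\<exists>K p. (K, p) \<in> recorded T R (RCPR T Its R ms mb) \<and> I \<subseteq> K))"
    using dec_cond[OF ctx IIts] False by blast
  show ?thesis unfolding DecF_def if_not_P[OF c] if_not_P[OF False] by (rule refl)
qed

theorem mainTheorem5:
  shows "exact_concise_rep (RCPR :: 't set \<Rightarrow> 'i set \<Rightarrow> ('t \<times> 'i) set \<Rightarrow> real \<Rightarrow> real \<Rightarrow> 'i set set)
         \<and> (\<forall>(T :: 't set) (Its :: 'i set) R minsupp minbond. extraction_context T Its R \<longrightarrow>
               card (RCPR T Its R minsupp minbond) \<le> card (RCP T Its R minsupp minbond))"
proof (intro conjI allI impI)
  show "exact_concise_rep (RCPR :: 't set \<Rightarrow> 'i set \<Rightarrow> ('t \<times> 'i) set \<Rightarrow> real \<Rightarrow> real \<Rightarrow> 'i set set)"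
    unfolding exact_concise_rep_def
  proof (intro conjI allI impI exI[of _ DecF])
    fix T :: "'t set" and Its :: "'i set" and R ms mb
    show "RCPR T Its R ms mb \<subseteq> RCP T Its R ms mb" by (rule rcpr_sub)
  next
    fix T :: "'t set" and Its :: "'i set" and R ms mb I
    assume "extraction_context T Its R" "I \<subseteq> Its"
    thus "DecF (recorded T R (RCPR T Its R ms mb)) ms mb I =
            (if I \<in> RCP T Its R ms mb then Some (conj_supp T R I, bond T R I) else None)"
      by (rule dec_ok)
  qed
next
  fix T :: "'t set" and Its :: "'i set" and R ms mb
  assume ctx: "extraction_context T Its R"
  have "RCP T Its R ms mb \<subseteq> Pow Its" unfolding RCP_def by blast
  hence "finite (RCP T Its R ms mb)"
    using ctx finite_subset unfolding extraction_context_def by blast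
  thus "card (RCPR T Its R ms mb) \<le> card (RCP T Its R ms mb)" by (rule card_mono[OF _ rcpr_sub])
qed

end
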